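(* Let $E$ be a finite geometric commutative monoid of idempotents with set of atoms $A$. Then $E$ has a monoid presentation with generators $a\in A$ and relations: $a^2=a$ for $a\in A$; $ab=ba$ for $a,b\in A$; and, for every minimally dependent set $\{a_1,\dots,a_k\}$ of atoms, $\widehat{a}_1a_2\cdots a_k=a_1\widehat{a}_2a_3\cdots a_k=\cdots=a_1\cdots a_{k-1}\widehat{a}_k$, where $\widehat{a}_i$ means that $a_i$ is omitted.
   Context: A finite commutative monoid of idempotents $E$ is a join-semilattice with least element $\mathbf 0$ (the identity) via $x\le y\iff xy=y$, with $xy=x\vee y$. It is graded if all saturated chains from $\mathbf 0$ to any $x$ have the same length $\mathrm{rk}(x)$; atoms are the elements of rank $1$; it is atomic if every element is a join of atoms. $E$ is geometric if it is a graded atomic lattice with $\mathrm{rk}(a\vee b)+\mathrm{rk}(a\wedge b)\le\mathrm{rk}(a)+\mathrm{rk}(b)$ for all $a,b$. A set $S$ of atoms is independent if $\bigvee(S\setminus\{s\})<\bigvee S$ for all $s\in S$, dependent otherwise, and minimally dependent if dependent with every proper subset independent. *)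

theory Defs
  imports Main
begin

text \<open>A finite commutative monoid of idempotents is modelled as a type
  'a of sort {finite, comm_monoid_mult} with x * x = x for all x.
  The identity 1 is the least element 0 of the join-semilattice.\<close>

definition mleq :: "'a::comm_monoid_mult \<Rightarrow> 'a \<Rightarrow> bool" where
  "mleq x y \<longleftrightarrow> x * y = y"

definition mless :: "'a::comm_monoid_mult \<Rightarrow> 'a \<Rightarrow> bool" where
  "mless x y \<longleftrightarrow> mleq x y \<and> x \<noteq> y"

definition mcovers :: "'a::comm_monoid_mult \<Rightarrow> 'a \<Rightarrow> bool" where
  "mcovers x y \<longleftrightarrow> mless x y \<and> \<not> (\<exists>z. mless x z \<and> mless z y)"

text \<open>Saturated chain from the least element 1 to x, listed as c0 = 1, ..., cn = x;
  its length is n = length c - 1.\<close>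
definition sat_chain :: "'a::comm_monoid_mult list \<Rightarrow> 'a \<Rightarrow> bool" where
  "sat_chain c x \<longleftrightarrow> c \<noteq> [] \<and> hd c = 1 \<and> last c = x \<and>
     (\<forall>i. Suc i < length c \<longrightarrow> mcovers (c ! i) (c ! Suc i))"

definition graded :: "'a::{finite,comm_monoid_mult} itself \<Rightarrow> bool" where
  "graded _ \<longleftrightarrow> (\<forall>(x::'a) c d. sat_chain c x \<and> sat_chain d x \<longrightarrow> length c = length d)"

definition rk :: "'a::comm_monoid_mult \<Rightarrow> nat" where
  "rk x = (SOME n. \<exists>c. sat_chain c x \<and> length c = Suc n)"

definition atom :: "'a::comm_monoid_mult \<Rightarrow> bool" where
  "atom a \<longleftrightarrow> rk a = 1"

definition join_set :: "'a::comm_monoid_mult set \<Rightarrow> 'a" where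
  "join_set S = \<Prod>S"

definition atomic :: "'a::{finite,comm_monoid_mult} itself \<Rightarrow> bool" where
  "atomic _ \<longleftrightarrow> (\<forall>x::'a. \<exists>S. (\<forall>a\<in>S. atom a) \<and> x = join_set S)"

definition is_meet :: "'a::comm_monoid_mult \<Rightarrow> 'a \<Rightarrow> 'a \<Rightarrow> bool" where
  "is_meet a b m \<longleftrightarrow> mleq m a \<and> mleq m b \<and> (\<forall>z. mleq z a \<and> mleq z b \<longrightarrow> mleq z m)"

definition meet :: "'a::comm_monoid_mult \<Rightarrow> 'a \<Rightarrow> 'a" where
  "meet a b = (THE m. is_meet a b m)"

definition geometric :: "'a::{finite,comm_monoid_mult} itself \<Rightarrow> bool" where
  "geometric T \<longleftrightarrow> graded T \<and> atomic T \<and>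
     (\<forall>a b::'a. \<exists>m. is_meet a b m) \<and>
     (\<forall>a b::'a. rk (a * b) + rk (meet a b) \<le> rk a + rk b)"

definition independent :: "'a::comm_monoid_mult set \<Rightarrow> bool" where
  "independent S \<longleftrightarrow> (\<forall>s\<in>S. mless (join_set (S - {s})) (join_set S))"

definition min_dependent :: "'a::comm_monoid_mult set \<Rightarrow> bool" where
  "min_dependent S \<longleftrightarrow> (\<forall>a\<in>S. atom a) \<and> \<not> independent S \<and>
     (\<forall>T. T \<subset> S \<longrightarrow> independent T)"

inductive mcong :: "('b list \<times> 'b list) set \<Rightarrow> 'b list \<Rightarrow> 'b list \<Rightarrow> bool"
  for R where
  base: "(x, y) \<in> R \<Longrightarrow> mcong R (u @ x @ v) (u @ y @ v)"
| refl: "mcong R w w"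
| sym: "mcong R w w' \<Longrightarrow> mcong R w' w"
| trans: "mcong R w w' \<Longrightarrow> mcong R w' w'' \<Longrightarrow> mcong R w w''"

definition omit :: "nat \<Rightarrow> 'b list \<Rightarrow> 'b list" where
  "omit i xs = take i xs @ drop (Suc i) xs"

definition pres_rels :: "'a::comm_monoid_mult itself \<Rightarrow> ('a list \<times> 'a list) set" where
  "pres_rels _ =
     {([a, a], [a]) | a::'a. atom a}
   \<union> {([a, b], [b, a]) | a b::'a. atom a \<and> atom b}
   \<union> {(omit i xs, omit j xs) | (xs::'a list) i j.
        distinct xs \<and> min_dependent (set xs) \<and> i < length xs \<and> j < length xs}"

definition has_presentation :: "'a::monoid_mult itself \<Rightarrow> ('a \<Rightarrow> bool) \<Rightarrow> ('a list \<times> 'a list) set \<Rightarrow> bool" where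
  "has_presentation _ gen R \<longleftrightarrow>
     (\<forall>x::'a. \<exists>w. (\<forall>a\<in>set w. gen a) \<and> prod_list w = x) \<and>
     (\<forall>u v. (\<forall>a\<in>set u. gen a) \<and> (\<forall>a\<in>set v. gen a) \<longrightarrow>
        (prod_list u = prod_list v \<longleftrightarrow> mcong R u v))"

end

theory Submission imports Defs begin

definition chain_from :: "'a::comm_monoid_mult \<Rightarrow> 'a list \<Rightarrow> 'a \<Rightarrow> bool" where
  "chain_from x c y \<longleftrightarrow> c \<noteq> [] \<and> hd c = x \<and> last c = y \<and>
     (\<forall>i. Suc i < length c \<longrightarrow> mcovers (c ! i) (c ! Suc i))"

lemma sat_chain_from: "sat_chain c x = chain_from 1 c x"
  by (simp add: sat_chain_def chain_from_def)

lemma chain_snoc: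
  assumes "chain_from x c z" "mcovers z y"
  shows "chain_from x (c @ [y]) y"
  unfolding chain_from_def
proof (intro conjI allI impI)
  show "c @ [y] \<noteq> []" by simp
  show "hd (c @ [y]) = x" using assms(1) by (simp add: chain_from_def)
  show "last (c @ [y]) = y" by simp
  fix i assume i: "Suc i < length (c @ [y])"
  show "mcovers ((c @ [y]) ! i) ((c @ [y]) ! Suc i)"
  proof (cases "Suc i < length c")
    case True
    then show ?thesis using assms(1) by (simp add: chain_from_def nth_append)
  next
    case False
    then have e: "Suc i = length c" using i by simp
    have ii: "i = length c - 1" using e by simp
    have "(c @ [y]) ! i = c ! (length c - 1)" using e ii by (simp add: nth_append)
    also have "\<dots> = z" using assms(1) unfolding chain_from_def by (metis last_conv_nth)
    finally show ?thesis using e assms(2) by (simp add: nth_append)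
  qed
qed

locale igeo =
  fixes T :: "'a::{finite,comm_monoid_mult} itself"
  assumes idem: "\<And>x::'a. x * x = x"
    and geo: "geometric TYPE('a)"
begin

lemma graded: "graded TYPE('a)" using geo by (simp add: geometric_def)

lemma mleq_refl[simp]: "mleq x (x::'a)" by (simp add: mleq_def idem)
lemma mleq_trans: "mleq x y \<Longrightarrow> mleq y z \<Longrightarrow> mleq (x::'a) z"
  unfolding mleq_def by (metis mult.assoc)
lemma mleq_antisym: "mleq x y \<Longrightarrow> mleq y x \<Longrightarrow> (x::'a) = y"
  unfolding mleq_def by (metis mult.commute)
lemma mleq_one[simp]: "mleq 1 (x::'a)" by (simp add: mleq_def)
lemma mleq_mult: "mleq x (y * (x::'a))" unfolding mleq_def
  by (metis mult.assoc mult.commute idem)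
lemma mless_trans: "mless w x \<Longrightarrow> mless x y \<Longrightarrow> mless w (y::'a)"
  unfolding mless_def using mleq_trans mleq_antisym by blast

definition h :: "'a \<Rightarrow> nat" where "h y = card {w. mless w y}"

lemma mless_h: "mless x y \<Longrightarrow> h x < h y"
  unfolding h_def
proof (rule psubset_card_mono)
  assume a: "mless x y"
  show "finite {w. mless w y}" by simp
  have "{w. mless w x} \<subseteq> {w. mless w y}" using a mless_trans by blast
  moreover have "x \<in> {w. mless w y}" "x \<notin> {w. mless w x}" using a by (auto simp: mless_def)
  ultimately show "{w. mless w x} \<subset> {w. mless w y}" by blast
qed

lemma chain_ext:
  "chain_from 1 c (x::'a) \<Longrightarrow> mleq x y \<Longrightarrow>
   \<exists>c'. chain_from 1 c' y \<and> length c \<le> length c' \<and> (x \<noteq> y \<longrightarrow> length c < length c')"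
proof (induction "h y" arbitrary: y rule: less_induct)
  case less
  show ?case
  proof (cases "x = y")
    case True then show ?thesis using less by auto
  next
    case False
    let ?Z = "{z. mleq x z \<and> mless z y}"
    have xZ: "x \<in> ?Z" using False less by (simp add: mless_def)
    let ?m = "Max (h ` ?Z)"
    have ne: "h ` ?Z \<noteq> {}" using xZ by blast
    have "?m \<in> h ` ?Z" using Max_in[OF _ ne] by simp
    then obtain z where zZ: "z \<in> ?Z" and zm: "h z = ?m" by auto
    have mx: "\<And>w. w \<in> ?Z \<Longrightarrow> h w \<le> h z" using zm by simp
    have cov: "mcovers z y"
      unfolding mcovers_def
    proof
      show "mless z y" using zZ by simp
      show "\<not> (\<exists>w. mless z w \<and> mless w y)"
      proof
        assume "\<exists>w. mless z w \<and> mless w y"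
        then obtain w where w: "mless z w" "mless w y" by blast
        then have "w \<in> ?Z" using zZ mleq_trans by (auto simp: mless_def)
        then have "h w \<le> h z" by (rule mx)
        moreover have "h z < h w" using w(1) by (rule mless_h)
        ultimately show False by simp
      qed
    qed
    have "h z < h y" using zZ mless_h by simp
    then obtain c'' where c'': "chain_from 1 c'' z" "length c \<le> length c''"
      using less zZ by blast
    then show ?thesis using chain_snoc[OF c''(1) cov] by (intro exI[of _ "c'' @ [y]"]) auto
  qed
qed

lemma chain_exists: "\<exists>c. chain_from 1 c (y::'a)"
proof -
  have "chain_from 1 [1::'a] 1" by (simp add: chain_from_def)
  then show ?thesis using chain_ext[of "[1]" 1 y] by auto
qed

lemma rk_chain: assumes "chain_from 1 c (x::'a)" shows "rk x = length c - 1"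
proof -
  have ne: "c \<noteq> []" using assms by (simp add: chain_from_def)
  have "\<exists>n c. sat_chain c x \<and> length c = Suc n"
    using assms ne by (intro exI[of _ "length c - 1"] exI[of _ c]) (auto simp: sat_chain_from)
  then have "\<exists>c'. sat_chain c' x \<and> length c' = Suc (rk x)"
    unfolding rk_def by (rule someI_ex)
  then obtain c' where "sat_chain c' x" "length c' = Suc (rk x)" by blast
  moreover have "length c' = length c"
  proof -
    have "\<forall>(x::'a) c d. sat_chain c x \<and> sat_chain d x \<longrightarrow> length c = length d"
      using graded unfolding graded_def by blast
    then show ?thesis using calculation assms unfolding sat_chain_from by blast
  qed
  ultimately show ?thesis by simp
qed

lemma rk_one[simp]: "rk (1::'a) = 0"
  using rk_chain[of "[1]" 1] by (simp add: chain_from_def)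

lemma rk_strict: assumes "mless x (y::'a)" shows "rk x < rk y"
proof -
  obtain c where c: "chain_from 1 c x" using chain_exists by blast
  obtain c' where "chain_from 1 c' y" "length c < length c'"
    using chain_ext[OF c] assms by (auto simp: mless_def)
  moreover have "c \<noteq> []" using c by (simp add: chain_from_def)
  ultimately show ?thesis using rk_chain[OF c] rk_chain[of c' y] by (cases c) auto
qed

lemma atom_ne_one: "atom a \<Longrightarrow> a \<noteq> (1::'a)" by (auto simp: atom_def)

lemma rk_join_atom: "atom a \<Longrightarrow> rk (x * (a::'a)) \<le> rk x + 1"
proof -
  assume "atom a"
  have "rk (x * a) + rk (meet x a) \<le> rk x + rk a" using geo by (simp add: geometric_def)
  then show ?thesis using \<open>atom a\<close> by (simp add: atom_def)
qed


lemma prod_absorb: "a \<in> S \<Longrightarrow> a * \<Prod>S = \<Prod>(S::'a set)"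
  by (metis prod.remove[of S a] finite mult.assoc idem)
lemma mleq_prod: "a \<in> S \<Longrightarrow> mleq a (\<Prod>(S::'a set))" by (simp add: mleq_def prod_absorb)

lemma prod_list_set: "prod_list w = \<Prod>(set (w::'a list))"
proof (induction w)
  case Nil then show ?case by simp
next
  case (Cons a w)
  then show ?case
    by (cases "a \<in> set w") (simp_all add: prod_absorb insert_absorb)
qed

lemma rk_prod_le: "finite S \<Longrightarrow> (\<forall>a\<in>S. atom a) \<Longrightarrow> rk (\<Prod>(S::'a set)) \<le> card S"
proof (induction S rule: finite_induct)
  case empty then show ?case by simp
next
  case (insert a S)
  then have "rk (\<Prod>S * a) \<le> rk (\<Prod>S) + 1" using rk_join_atom by simp
  then show ?case using insert by (simp add: mult.commute)
qed

lemma rk_prod_ge: "finite I \<Longrightarrow> (\<forall>J\<subseteq>I. independent J) \<Longrightarrow> card I \<le> rk (\<Prod>(I::'a set))"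
proof (induction I rule: finite_induct)
  case empty then show ?case by simp
next
  case (insert t J)
  have "independent (insert t J)" using insert by blast
  then have "mless (join_set (insert t J - {t})) (join_set (insert t J))"
    unfolding independent_def by blast
  moreover have "insert t J - {t} = J" using insert by auto
  ultimately have "rk (\<Prod>J) < rk (\<Prod>(insert t J))" using rk_strict by (simp add: join_set_def)
  moreover have "card J \<le> rk (\<Prod>J)" using insert by blast
  ultimately show ?case using insert by simp
qed

lemma circuit: assumes "min_dependent (D::'a set)" "c \<in> D" shows "\<Prod>(D - {c}) = \<Prod>D"
proof (rule ccontr)
  assume ne: "\<Prod>(D - {c}) \<noteq> \<Prod>D"
  have eq: "\<Prod>D = c * \<Prod>(D - {c})" using assms(2) by (simp add: prod.remove)
  have "mless (\<Prod>(D - {c})) (\<Prod>D)" using ne eq mleq_mult by (simp add: mless_def)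
  then have lt: "rk (\<Prod>(D - {c})) < rk (\<Prod>D)" by (rule rk_strict)
  have "\<forall>J\<subseteq>D - {c}. independent J" using assms unfolding min_dependent_def by blast
  then have "card (D - {c}) \<le> rk (\<Prod>(D - {c}))" using rk_prod_ge by simp
  moreover have cD: "card D = card (D - {c}) + 1" using assms(2)
    by (metis card_Suc_Diff1 finite Suc_eq_plus1)
  ultimately have ge: "card D \<le> rk (\<Prod>D)" using lt by simp
  obtain s where s: "s \<in> D" "\<not> mless (join_set (D - {s})) (join_set D)"
    using assms(1) unfolding min_dependent_def independent_def by blast
  have "mleq (\<Prod>(D - {s})) (\<Prod>D)" using s(1) mleq_mult by (simp add: prod.remove)
  then have "\<Prod>(D - {s}) = \<Prod>D" using s(2) by (simp add: mless_def join_set_def)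
  moreover have "rk (\<Prod>(D - {s})) \<le> card (D - {s})"
    using assms(1) by (intro rk_prod_le) (auto simp: min_dependent_def)
  moreover have "card (D - {s}) + 1 = card D" using s(1) by (metis card_Suc_Diff1 finite Suc_eq_plus1)
  ultimately show False using ge by simp
qed

lemma set_omit: assumes "distinct xs" "i < length xs"
  shows "set (omit i xs) = set xs - {xs ! i}"
proof -
  have e: "xs = take i xs @ xs ! i # drop (Suc i) xs" using assms(2) by (simp add: id_take_nth_drop)
  have "distinct (take i xs @ xs ! i # drop (Suc i) xs)" using e assms(1) by simp
  then show ?thesis unfolding omit_def by (subst (3) e) auto
qed

lemma sound_rel: "(x, y) \<in> pres_rels TYPE('a) \<Longrightarrow> prod_list x = prod_list y"
proof (unfold pres_rels_def, elim UnE CollectE exE conjE)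
  fix a :: 'a assume "(x, y) = ([a, a], [a])" then show ?thesis by (simp add: idem)
next
  fix a b :: 'a assume "(x, y) = ([a, b], [b, a])" then show ?thesis by (simp add: mult.commute)
next
  fix xs :: "'a list" and i j
  assume "(x, y) = (omit i xs, omit j xs)" "distinct xs" "min_dependent (set xs)"
    "i < length xs" "j < length xs"
  then show ?thesis using circuit by (simp add: prod_list_set set_omit)
qed

lemma sound: "mcong (pres_rels TYPE('a)) u v \<Longrightarrow> prod_list u = prod_list (v::'a list)"
  by (induction rule: mcong.induct) (auto simp: sound_rel)



abbreviation R :: "('a list \<times> 'a list) set" where "R \<equiv> pres_rels TYPE('a)"
abbreviation aw :: "'a list \<Rightarrow> bool" where "aw w \<equiv> (\<forall>a\<in>set w. atom a)"

lemma cong_app: "mcong R u v \<Longrightarrow> mcong R (p @ u @ q) (p @ v @ q)"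
proof (induction rule: mcong.induct)
  case (base x y u v)
  then show ?case using mcong.base[of x y R "p @ u" "v @ q"] by simp
qed (auto intro: mcong.intros)

lemma swap1: "atom a \<Longrightarrow> aw w \<Longrightarrow> mcong R ([a] @ w) (w @ [a])"
proof (induction w)
  case Nil then show ?case by (simp add: mcong.refl)
next
  case (Cons b w)
  have "([a, b], [b, a]) \<in> R" using Cons by (simp add: pres_rels_def)
  then have 1: "mcong R (a # b # w) (b # a # w)" using mcong.base[of "[a,b]" "[b,a]" R "[]" w] by simp
  have "mcong R ([b] @ ([a] @ w) @ []) ([b] @ (w @ [a]) @ [])" using Cons by (intro cong_app) simp
  then show ?case using 1 by (auto intro: mcong.trans)
qed

lemma absorb: assumes "aw u" "a \<in> set u" shows "mcong R u (u @ [a])"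
proof -
  obtain p q where u: "u = p @ a # q" using assms(2) by (metis split_list)
  have "mcong R ([a] @ q) (q @ [a])" using assms u by (intro swap1) auto
  then have 1: "mcong R (p @ [a] @ (q @ [a])) (p @ [a] @ ([a] @ q))"
    using cong_app[of "q @ [a]" "[a] @ q" "p @ [a]" "[]"] by (simp add: mcong.sym)
  have "([a, a], [a]) \<in> R" using assms u by (simp add: pres_rels_def)
  then have 2: "mcong R (p @ [a, a] @ q) (p @ [a] @ q)" by (rule mcong.base)
  have "mcong R (u @ [a]) u" using 1 2 u by (auto intro: mcong.trans)
  then show ?thesis by (rule mcong.sym)
qed

lemma absorb_list: "aw u \<Longrightarrow> set v \<subseteq> set u \<Longrightarrow> mcong R u (u @ v)"
proof (induction v arbitrary: u)
  case Nil then show ?case by (simp add: mcong.refl)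
next
  case (Cons b v)
  have 1: "mcong R u (u @ [b])" using Cons by (intro absorb) auto
  have "mcong R (u @ [b]) ((u @ [b]) @ v)" using Cons by (intro Cons.IH) auto
  then show ?case using 1 by (auto intro: mcong.trans)
qed

lemma comm_words: "aw u \<Longrightarrow> aw v \<Longrightarrow> mcong R (u @ v) (v @ u)"
proof (induction u)
  case Nil then show ?case by (simp add: mcong.refl)
next
  case (Cons a u)
  have 1: "mcong R ([a] @ (u @ v) @ []) ([a] @ (v @ u) @ [])" using Cons by (intro cong_app) auto
  have "mcong R ([] @ ([a] @ v) @ u) ([] @ (v @ [a]) @ u)" using Cons by (intro cong_app swap1) auto
  then show ?case using 1 by (auto intro: mcong.trans)
qed

lemma set_eq_cong: assumes "aw u" "aw v" "set u = set v" shows "mcong R u v"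
proof -
  have "mcong R u (u @ v)" using assms by (intro absorb_list) auto
  moreover have "mcong R (u @ v) (v @ u)" using assms by (intro comm_words)
  moreover have "mcong R v (v @ u)" using assms by (intro absorb_list) auto
  ultimately show ?thesis by (meson mcong.sym mcong.trans)
qed

lemma circuit_words: assumes "min_dependent (D::'a set)" "a \<in> D" "b \<in> D"
  shows "\<exists>w1 w2. set w1 = D - {a} \<and> set w2 = D - {b} \<and> mcong R w1 w2"
proof -
  obtain xs where xs: "set xs = D" "distinct xs" using finite_distinct_list[OF finite] by blast
  obtain i where i: "i < length xs" "xs ! i = a" using assms(2) xs by (metis in_set_conv_nth)
  obtain j where j: "j < length xs" "xs ! j = b" using assms(3) xs by (metis in_set_conv_nth)
  have "(omit i xs, omit j xs) \<in> R" unfolding pres_rels_def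
    apply (rule UnI2, rule CollectI)
    apply (rule exI[of _ xs], rule exI[of _ i], rule exI[of _ j])
    using xs i j assms(1) by simp
  then have c: "mcong R ([] @ omit i xs @ []) ([] @ omit j xs @ [])" by (rule mcong.base)
  have s1: "set (omit i xs) = D - {a}" using set_omit[OF xs(2) i(1)] xs i by simp
  have s2: "set (omit j xs) = D - {b}" using set_omit[OF xs(2) j(1)] xs j by simp
  show ?thesis using c s1 s2 by (intro exI[of _ "omit i xs"] exI[of _ "omit j xs"]) simp
qed

lemma mindep_two: assumes "min_dependent (D::'a set)" "d \<in> D" shows "\<exists>e\<in>D. e \<noteq> d"
proof (rule ccontr)
  assume "\<not> ?thesis"
  then have D: "D = {d}" using assms(2) by blast
  have "atom d" using assms D by (simp add: min_dependent_def)
  then have "mless 1 d" using atom_ne_one[of d] by (simp add: mless_def)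
  then have "independent D" using D by (simp add: independent_def join_set_def)
  then show False using assms(1) by (simp add: min_dependent_def)
qed

lemma key: "aw u \<Longrightarrow> atom a \<Longrightarrow> mleq a (prod_list u) \<Longrightarrow> mcong R u (u @ [a])"
proof (induction "card (set u)" arbitrary: u rule: less_induct)
  case less
  show ?case
  proof (cases "a \<in> set u")
    case True then show ?thesis using less absorb by blast
  next
    case False
    let ?S = "set u" let ?S' = "insert a ?S"
    have pu: "\<Prod>?S = prod_list u" by (simp add: prod_list_set)
    have "\<Prod>?S' = \<Prod>?S" using False less(4) pu by (simp add: mleq_def)
    moreover have "?S' - {a} = ?S" using False by auto
    ultimately have dep: "\<not> independent ?S'" unfolding independent_def join_set_def mless_def by auto
    obtain D where D: "D \<subseteq> ?S' \<and> \<not> independent D"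
      and Dmin: "\<forall>T. T \<subseteq> ?S' \<and> \<not> independent T \<longrightarrow> card D \<le> card T"
      using ex_has_least_nat[of "\<lambda>D. D \<subseteq> ?S' \<and> \<not> independent D" ?S' card] dep by blast
    have md: "min_dependent D"
      unfolding min_dependent_def
    proof (intro conjI allI impI)
      show "\<forall>b\<in>D. atom b" using D less(2,3) by auto
      show "\<not> independent D" using D by blast
      fix T assume TD: "T \<subset> D"
      then have lt: "card T < card D" by (simp add: psubset_card_mono)
      have TS: "T \<subseteq> ?S'" using TD D by blast
      show "independent T"
      proof (rule ccontr)
        assume "\<not> independent T"
        then have "card D \<le> card T" using Dmin TS by blast
        then show False using lt by simp
      qed
    qed
    have atD: "\<forall>b\<in>D. atom b" using md unfolding min_dependent_def by blast
    show ?thesis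
    proof (cases "a \<in> D")
      case True
      obtain c where c: "c \<in> D" "c \<noteq> a" using mindep_two[OF md True] by blast
      obtain w1 w2 where w: "set w1 = D - {a}" "set w2 = D - {c}" "mcong R w1 w2"
        using circuit_words[OF md True c(1)] by blast
      have aw1: "aw w1" "aw w2" unfolding w(1,2) using atD by blast+
      have e1: "set u = set (u @ w1)" unfolding set_append w(1) using D by blast
      have "aw (u @ w1)" using aw1 less(2) by auto
      then have 1: "mcong R u (u @ w1)" using set_eq_cong[OF less(2) _ e1] by blast
      have 2: "mcong R (u @ w1) (u @ w2)" using cong_app[OF w(3), of u "[]"] by simp
      have e3: "set (u @ w2) = set (u @ [a])" unfolding set_append w(2) using D c True by auto
      have "aw (u @ w2)" "aw (u @ [a])" using aw1 less(2,3) by auto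
      then have 3: "mcong R (u @ w2) (u @ [a])" using set_eq_cong e3 by blast
      show ?thesis using mcong.trans[OF mcong.trans[OF 1 2] 3] .
    next
      case False
      then have DS: "D \<subseteq> ?S" using D by blast
      obtain d where d: "d \<in> D"
        using D by (auto simp: independent_def)
      obtain e where e: "e \<in> D" "e \<noteq> d" using mindep_two[OF md d] by blast
      obtain w1 w2 where w: "set w1 = D - {d}" "set w2 = D - {e}" "mcong R w1 w2"
        using circuit_words[OF md d e(1)] by blast
      define w where "w = filter (\<lambda>x. x \<noteq> d) u"
      have sw: "set w = ?S - {d}" by (auto simp: w_def)
      have aww: "aw w" using less(2) sw by auto
      have g: "\<And>p. aw p \<Longrightarrow> mcong R (w @ p) (u @ p)"
      proof -
        fix p assume p: "aw p"
        have aw1: "aw w1" "aw w2" unfolding w(1,2) using atD by blast+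
        have e1: "set (w @ p) = set ((w @ p) @ w1)" unfolding set_append w(1) sw using DS by blast
        have "aw (w @ p)" "aw ((w @ p) @ w1)" using aw1 aww p by auto
        then have 1: "mcong R (w @ p) ((w @ p) @ w1)" using set_eq_cong e1 by blast
        have 2: "mcong R ((w @ p) @ w1) ((w @ p) @ w2)" using cong_app[OF w(3), of "w @ p" "[]"] by simp
        have e3: "set ((w @ p) @ w2) = set (u @ p)" unfolding set_append w(2) sw using DS d e by blast
        have "aw ((w @ p) @ w2)" "aw (u @ p)" using aw1 aww p less(2) by auto
        then have 3: "mcong R ((w @ p) @ w2) (u @ p)" using set_eq_cong e3 by blast
        show "mcong R (w @ p) (u @ p)" using mcong.trans[OF mcong.trans[OF 1 2] 3] .
      qed
      have wu: "mcong R w u" using g[of "[]"] by simp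
      have wua: "mcong R (w @ [a]) (u @ [a])" using g[of "[a]"] less(3) by simp
      have dS: "d \<in> ?S" using d DS by blast
      have "card (set w) < card ?S" unfolding sw using card_Diff1_less[OF finite dS] .
      moreover have "prod_list w = prod_list u" using sound[OF wu] .
      ultimately have ww: "mcong R w (w @ [a])" using less aww by simp
      show ?thesis using mcong.trans[OF mcong.trans[OF mcong.sym[OF wu] ww] wua] .
    qed
  qed
qed

lemma absorb_below: "aw u \<Longrightarrow> aw v \<Longrightarrow> (\<forall>b\<in>set v. mleq b (prod_list u)) \<Longrightarrow> mcong R u (u @ v)"
proof (induction v arbitrary: u)
  case Nil then show ?case by (simp add: mcong.refl)
next
  case (Cons b v)
  have 1: "mcong R u (u @ [b])" using Cons by (intro key) auto
  have "prod_list (u @ [b]) = prod_list u" using Cons.prems(3)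
    by (simp add: mleq_def mult.commute)
  then have "mcong R (u @ [b]) ((u @ [b]) @ v)" using Cons by (intro Cons.IH) auto
  then show ?case using 1 by (auto intro: mcong.trans)
qed

lemma complete: assumes "aw u" "aw v" "prod_list u = prod_list v" shows "mcong R u v"
proof -
  have "\<forall>b\<in>set v. mleq b (prod_list u)" using assms(3) by (simp add: prod_list_set mleq_prod)
  then have 1: "mcong R u (u @ v)" using assms by (intro absorb_below)
  have "\<forall>b\<in>set u. mleq b (prod_list v)" using assms(3)[symmetric] by (simp add: prod_list_set mleq_prod)
  then have 2: "mcong R v (v @ u)" using assms by (intro absorb_below)
  show ?thesis using 1 2 comm_words[OF assms(1,2)] by (meson mcong.sym mcong.trans)
qed

end

theorem theorem1:
  assumes "\<forall>x::'a::{finite,comm_monoid_mult}. x * x = x"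
    and "geometric TYPE('a)"
  shows "has_presentation TYPE('a) atom (pres_rels TYPE('a))"
proof -
  interpret igeo "TYPE('a)" using assms by unfold_locales auto
  have surj: "\<exists>w. (\<forall>a\<in>set w. atom a) \<and> prod_list w = x" for x :: 'a
  proof -
    have "atomic TYPE('a)" using assms(2) by (simp add: geometric_def)
    then obtain S where S: "\<forall>a\<in>S. atom a" "x = join_set S" unfolding atomic_def by blast
    obtain xs where "set xs = S" "distinct xs" using finite_distinct_list[OF finite] by blast
    then show ?thesis using S by (intro exI[of _ xs]) (simp add: prod_list_set join_set_def)
  qed
  show ?thesis unfolding has_presentation_def
  proof (intro conjI allI impI)
    show "\<exists>w. (\<forall>a\<in>set w. atom a) \<and> prod_list w = x" for x :: 'a by (rule surj)
    fix u v :: "'a list"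
    assume uv: "(\<forall>a\<in>set u. atom a) \<and> (\<forall>a\<in>set v. atom a)"
    show "prod_list u = prod_list v \<longleftrightarrow> mcong (pres_rels TYPE('a)) u v"
      using sound[of u v] complete[of u v] uv by blast
  qed
qed

end
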